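(* Let $\mathbf v=(v_1,\dots,v_m)$ and $\mathbf k=(k_1,\dots,k_m)$ be $m$-tuples of positive integers with $\mathbf v\ge\mathbf k$, and let $\mathbf r=(r_1,\dots,r_m)$ be a tuple of integers with $0\le r_i\le k_i-2$ for all $i$. Then $C(\mathbf v,\mathbf k,2)\le C(\mathbf v-\mathbf r,\mathbf k-\mathbf r,2)$.
   Context: For $m$-tuples $\mathbf a,\mathbf b$ of positive integers with $\mathbf b\le\mathbf a$ entrywise: let $X_1,\dots,X_m$ be pairwise disjoint sets with $|X_i|=a_i$; a block is an $m$-tuple $(B_1,\dots,B_m)$ with $B_i\subseteq X_i$, $|B_i|=b_i$; an $m$-tuple of sets $(T_1,\dots,T_m)$ is $(\mathbf a,\mathbf b,2)$-admissible if $T_i\subseteq X_i$, $|T_i|\le b_i$ and $\sum|T_i|=2$, and is contained in a block if $T_i\subseteq B_i$ for all $i$. A ${\rm GC}(\mathbf a,\mathbf b,2)$ is a finite family (repetitions allowed) of blocks containing every admissible tuple in at least one block; $C(\mathbf a,\mathbf b,2)$ is the minimum number of blocks. Vector subtraction is entrywise. *)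

theory Defs
  imports Main
begin

(* The pairwise disjoint ground sets
   X_1..X_m are realised concretely: X_i is a copy of {0..<a_i}, indexed by i,
   so an m-tuple of subsets (S_1..S_m) is a function S :: nat => nat set with
   S i \<subseteq> {..<a!i} for i < m (and S i = {} for i >= m). *)

definition is_block :: "nat list \<Rightarrow> nat list \<Rightarrow> (nat \<Rightarrow> nat set) \<Rightarrow> bool" where
  "is_block a b B \<longleftrightarrow>
     (\<forall>i < length a. B i \<subseteq> {..<a!i} \<and> card (B i) = b!i) \<and>
     (\<forall>i \<ge> length a. B i = {})"

definition admissible2 :: "nat list \<Rightarrow> nat list \<Rightarrow> (nat \<Rightarrow> nat set) \<Rightarrow> bool" where
  "admissible2 a b T \<longleftrightarrow>
     (\<forall>i < length a. T i \<subseteq> {..<a!i} \<and> card (T i) \<le> b!i) \<and>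
     (\<forall>i \<ge> length a. T i = {}) \<and>
     (\<Sum>i<length a. card (T i)) = 2"

definition contained_in :: "nat list \<Rightarrow> (nat \<Rightarrow> nat set) \<Rightarrow> (nat \<Rightarrow> nat set) \<Rightarrow> bool" where
  "contained_in a T B \<longleftrightarrow> (\<forall>i < length a. T i \<subseteq> B i)"

(* A GC(a,b,2): a finite family of blocks (a list, so repetitions allowed)
   containing every admissible tuple in at least one block. *)
definition is_GC2 :: "nat list \<Rightarrow> nat list \<Rightarrow> (nat \<Rightarrow> nat set) list \<Rightarrow> bool" where
  "is_GC2 a b F \<longleftrightarrow>
     (\<forall>B \<in> set F. is_block a b B) \<and>
     (\<forall>T. admissible2 a b T \<longrightarrow> (\<exists>B \<in> set F. contained_in a T B))"

definition C2 :: "nat list \<Rightarrow> nat list \<Rightarrow> nat" where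
  "C2 a b = (LEAST n. \<exists>F. is_GC2 a b F \<and> length F = n)"

end

theory Submission imports Defs begin

lemma subset_between:
  assumes "finite U" "A \<subseteq> U" "card A \<le> n" "n \<le> card U"
  shows "\<exists>S. A \<subseteq> S \<and> S \<subseteq> U \<and> card S = n"
proof -
  have fA: "finite A" using assms finite_subset by blast
  have "n - card A \<le> card (U - A)" using assms fA by (simp add: card_Diff_subset)
  then obtain S0 where S0: "S0 \<subseteq> U - A" "card S0 = n - card A" "finite S0"
    by (rule obtain_subset_with_card_n)
  have "card (A \<union> S0) = card A + card S0"
    using S0 fA by (subst card_Un_disjoint) auto
  then show ?thesis using S0 assms by (intro exI[of _ "A \<union> S0"]) auto
qed

lemma finite_blocks: "finite {B. is_block a b B}"
proof -
  let ?g = "\<lambda>B. {(i,x). i < length a \<and> x \<in> B i}"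
  have inj: "inj_on ?g {B. is_block a b B}"
  proof (rule inj_onI)
    fix B1 B2 assume h: "B1 \<in> {B. is_block a b B}" "B2 \<in> {B. is_block a b B}" "?g B1 = ?g B2"
    show "B1 = B2"
    proof
      fix i show "B1 i = B2 i"
      proof (cases "i < length a")
        case True then show ?thesis using h(3) by (auto simp: set_eq_iff)
      next
        case False then show ?thesis using h(1,2) by (auto simp: is_block_def)
      qed
    qed
  qed
  have "?g ` {B. is_block a b B} \<subseteq> Pow (SIGMA i:{..<length a}. {..<a!i})"
    by (auto simp: is_block_def)
  then have "finite (?g ` {B. is_block a b B})"
    by (rule finite_subset) auto
  then show ?thesis using finite_imageD inj by blast
qed

lemma gc_exists:
  assumes "length b = length a" "\<forall>i<length a. b!i \<le> a!i"
  shows "\<exists>F. is_GC2 a b F"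
proof -
  obtain F where F: "set F = {B. is_block a b B}" using finite_list[OF finite_blocks] by blast
  have "is_GC2 a b F"
    unfolding is_GC2_def
  proof (intro conjI allI impI)
    show "\<forall>B\<in>set F. is_block a b B" using F by auto
    fix T assume T: "admissible2 a b T"
    have "\<forall>i<length a. \<exists>S. T i \<subseteq> S \<and> S \<subseteq> {..<a!i} \<and> card S = b!i"
      using T assms unfolding admissible2_def by (auto intro!: subset_between)
    then obtain S where S: "\<forall>i<length a. T i \<subseteq> S i \<and> S i \<subseteq> {..<a!i} \<and> card (S i) = b!i"
      by metis
    let ?B = "\<lambda>i. if i < length a then S i else {}"
    have "is_block a b ?B" using S by (auto simp: is_block_def)
    moreover have "contained_in a T ?B" using S by (auto simp: contained_in_def)
    ultimately show "\<exists>B\<in>set F. contained_in a T B" using F by blast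
  qed
  then show ?thesis by blast
qed

theorem proposition3p23:
  fixes v k r :: "nat list" and m :: nat
  assumes "length v = m" and "length k = m" and "length r = m"
    and "\<forall>i < m. 0 < k!i \<and> k!i \<le> v!i"
    and "\<forall>i < m. 0 < v!i"
    and "\<forall>i < m. r!i \<le> k!i - 2 \<and> 2 \<le> k!i"
  shows "C2 v k \<le> C2 (map2 (-) v r) (map2 (-) k r)"
proof (cases "m = 0")
  case True then show ?thesis using assms by simp
next
  case False
  then have m0: "0 < m" by simp
  define v' where "v' = map2 (-) v r"
  define k' where "k' = map2 (-) k r"
  have lv': "length v' = m" and lk': "length k' = m" using assms by (auto simp: v'_def k'_def)
  have v'i: "\<And>i. i < m \<Longrightarrow> v'!i = v!i - r!i" and k'i: "\<And>i. i < m \<Longrightarrow> k'!i = k!i - r!i"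
    using assms by (auto simp: v'_def k'_def)
  have k'2: "\<And>i. i < m \<Longrightarrow> 2 \<le> k'!i" using k'i assms(6) by fastforce
  have kv': "\<And>i. i < m \<Longrightarrow> k'!i \<le> v'!i" using k'i v'i assms(4) by fastforce
  have "\<exists>F. is_GC2 v' k' F" using gc_exists[of k' v'] lv' lk' kv' by simp
  then have "\<exists>n F. is_GC2 v' k' F \<and> length F = n" by blast
  then have "\<exists>F. is_GC2 v' k' F \<and> length F = (LEAST n. \<exists>F. is_GC2 v' k' F \<and> length F = n)"
    by (rule LeastI_ex)
  then obtain F where F: "is_GC2 v' k' F" "length F = C2 v' k'"
    unfolding C2_def by blast
  have Fb: "\<And>B. B \<in> set F \<Longrightarrow> is_block v' k' B" using F(1) by (auto simp: is_GC2_def)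
  have Fc: "\<And>T. admissible2 v' k' T \<Longrightarrow> \<exists>B\<in>set F. contained_in v' T B"
    using F(1) by (auto simp: is_GC2_def)
  have cover: "\<exists>B\<in>set F. \<forall>i<m. T i \<subseteq> B i"
    if T1: "\<forall>i<m. T i \<subseteq> {..<v'!i}" and T2: "\<forall>i\<ge>m. T i = {}"
      and T3: "(\<Sum>i<m. card (T i)) \<le> 2" for T
  proof (cases "(\<Sum>i<m. card (T i)) = 2")
    case True
    have "\<forall>i<m. card (T i) \<le> k'!i"
    proof (intro allI impI)
      fix i assume i: "i < m"
      have "card (T i) \<le> (\<Sum>i<m. card (T i))"
        using i by (intro member_le_sum) auto
      then show "card (T i) \<le> k'!i" using True k'2[OF i] by linarith
    qed
    then have "admissible2 v' k' T" using T1 T2 True lv' by (auto simp: admissible2_def)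
    then show ?thesis using Fc lv' by (auto simp: contained_in_def)
  next
    case False
    then have le1: "(\<Sum>i<m. card (T i)) \<le> 1" using T3 by linarith
    show ?thesis
    proof (cases "\<exists>j<m. T j \<noteq> {}")
      case False
      define P where "P = (\<lambda>i::nat. if i = 0 then {0::nat,1} else {})"
      have "v'!0 \<ge> 2" using kv'[OF m0] k'2[OF m0] by linarith
      have "(\<Sum>i<m. card (P i)) = (\<Sum>i<m. if i = 0 then 2 else 0::nat)"
        by (rule sum.cong) (auto simp: P_def)
      also have "\<dots> = 2" using m0 by (simp add: sum.delta)
      finally have sP: "(\<Sum>i<length v'. card (P i)) = 2" using lv' by simp
      have "admissible2 v' k' P" unfolding admissible2_def
        using k'2[OF m0] m0 lv' \<open>v'!0 \<ge> 2\<close> by (intro conjI sP) (auto simp: P_def)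
      then obtain B where "B \<in> set F" by (metis Fc)
      then show ?thesis using False by auto
    next
      case True
      then obtain j x where j: "j < m" "x \<in> T j" by blast
      have fin: "\<And>i. i < m \<Longrightarrow> finite (T i)" using T1 finite_subset by blast
      have split: "(\<Sum>i<m. card (T i)) = card (T j) + (\<Sum>i\<in>{..<m}-{j}. card (T i))"
        using j(1) by (simp add: sum.remove)
      have cj: "card (T j) \<ge> 1" using fin[OF j(1)] j by (metis One_nat_def Suc_leI card_gt_0_iff empty_iff)
      have others: "\<And>i. i < m \<Longrightarrow> i \<noteq> j \<Longrightarrow> T i = {}"
      proof -
        fix i assume i: "i < m" "i \<noteq> j"
        have "(\<Sum>i\<in>{..<m}-{j}. card (T i)) = 0" using split cj le1 by linarith
        then have "card (T i) = 0" using i by simp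
        then show "T i = {}" using fin[OF i(1)] by simp
      qed
      have "card (T j) = 1" using split cj le1 by linarith
      then have Tj: "T j = {x}" using j(2) by (metis card_1_singletonE singletonD)
      have "card {..<v'!j} \<ge> 2" using kv'[OF j(1)] k'2[OF j(1)] by simp
      then obtain y where y: "y \<in> {..<v'!j}" "y \<noteq> x"
        by (metis Diff_iff card_le_Suc0_iff_eq finite_lessThan insertI1 not_less_eq_eq numeral_2_eq_2 singletonD)
      define P where "P = (\<lambda>i. if i = j then {x,y} else {})"
      have "x < v'!j" using T1 j by auto
      have "(\<Sum>i<m. card (P i)) = (\<Sum>i<m. if i = j then 2 else 0::nat)"
        using y by (intro sum.cong) (auto simp: P_def)
      also have "\<dots> = 2" using j by (simp add: sum.delta)
      finally have sP: "(\<Sum>i<length v'. card (P i)) = 2" using lv' by simp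
      have "admissible2 v' k' P" unfolding admissible2_def
        using k'2[OF j(1)] j(1) lv' y \<open>x < v'!j\<close> by (intro conjI sP) (auto simp: P_def)
      then obtain B where B: "B \<in> set F" "contained_in v' P B" by (metis Fc)
      have "\<forall>i<m. T i \<subseteq> B i"
      proof (intro allI impI)
        fix i assume i: "i < m"
        show "T i \<subseteq> B i"
        proof (cases "i = j")
          case True then show ?thesis using B(2) i lv' Tj by (auto simp: contained_in_def P_def)
        next
          case False then show ?thesis using others i by simp
        qed
      qed
      then show ?thesis using B(1) by blast
    qed
  qed
  define ext where "ext = (\<lambda>B i. B i \<union> (if i < m then {v!i - r!i..<v!i} else {}))"
  have "is_GC2 v k (map ext F)"
    unfolding is_GC2_def
  proof (intro conjI ballI allI impI)
    fix B' assume "B' \<in> set (map ext F)"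
    then obtain B where B: "B \<in> set F" "B' = ext B" by auto
    have bB: "is_block v' k' B" using Fb B(1) .
    show "is_block v k B'"
      unfolding is_block_def
    proof (intro conjI allI impI)
      fix i assume i: "i < length v"
      then have im: "i < m" using assms by simp
      have Bi: "B i \<subseteq> {..<v!i - r!i}" "card (B i) = k!i - r!i"
        using bB im lv' v'i k'i unfolding is_block_def by auto
      have rv: "r!i \<le> v!i" using assms(4,6) im by fastforce
      have rk: "r!i \<le> k!i" using assms(6) im by fastforce
      show "B' i \<subseteq> {..<v!i}" using Bi B(2) im rv by (auto simp: ext_def)
      have fB: "finite (B i)" using Bi(1) finite_subset by blast
      have dj: "B i \<inter> {v!i - r!i..<v!i} = {}" using Bi(1) by auto
      have "card (B' i) = card (B i \<union> {v!i - r!i..<v!i})"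
        using B(2) im by (simp add: ext_def)
      also have "\<dots> = card (B i) + card {v!i - r!i..<v!i}"
        using fB dj by (intro card_Un_disjoint) auto
      finally have "card (B' i) = card (B i) + card {v!i - r!i..<v!i}" .
      then show "card (B' i) = k!i" using Bi rv rk by simp
    next
      fix i assume "length v \<le> i"
      then show "B' i = {}" using bB B(2) lv' assms(1) by (auto simp: ext_def is_block_def)
    qed
  next
    fix T assume T: "admissible2 v k T"
    define T' where "T' = (\<lambda>i. if i < m then T i \<inter> {..<v'!i} else {})"
    have finT: "\<And>i. i < m \<Longrightarrow> finite (T i)" using T assms(1) finite_subset
      unfolding admissible2_def by (metis finite_lessThan)
    have "(\<Sum>i<m. card (T' i)) \<le> (\<Sum>i<m. card (T i))"
      using finT by (intro sum_mono) (auto simp: T'_def intro!: card_mono)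
    also have "\<dots> = 2" using T assms(1) by (simp add: admissible2_def)
    finally have "\<exists>B\<in>set F. \<forall>i<m. T' i \<subseteq> B i"
      by (intro cover) (auto simp: T'_def)
    then obtain B where B: "B \<in> set F" "\<forall>i<m. T' i \<subseteq> B i" by blast
    have "contained_in v T (ext B)"
      unfolding contained_in_def
    proof (intro allI impI)
      fix i assume "i < length v"
      then have im: "i < m" using assms by simp
      have "T i \<subseteq> {..<v!i}" using T im assms(1) by (auto simp: admissible2_def)
      moreover have "T i \<inter> {..<v'!i} \<subseteq> B i" using B(2) im by (auto simp: T'_def)
      ultimately show "T i \<subseteq> ext B i" using im v'i[OF im]
        unfolding ext_def by (auto simp: subset_iff)
    qed
    then show "\<exists>B\<in>set (map ext F). contained_in v T B" using B(1) by auto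
  qed
  then have GC: "\<exists>G. is_GC2 v k G \<and> length G = length (map ext F)" by blast
  have "C2 v k \<le> length (map ext F)" unfolding C2_def
  proof (rule Least_le)
    show "\<exists>G. is_GC2 v k G \<and> length G = length (map ext F)" using GC by blast
  qed
  then show ?thesis using F(2) by (simp add: v'_def k'_def)
qed

end
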